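(* Let $\theta$ be an eigenvalue of a distance-regular graph $\Gamma$ with valency $k$ and diameter $3$, and let $u_0,u_1,u_2,u_3$ be its standard sequence. Then the following are equivalent: (i) $u_2(\theta)=0$; (ii) $\theta=a_3$; (iii) $\theta=\frac{a_1+\sqrt{a_1^2+4k}}{2}$. Moreover, if (i)–(iii) hold, then $\theta$ is the second largest eigenvalue of $\Gamma$.
   Context: A connected graph $\Gamma$ of diameter $D$ is distance-regular if there are integers $b_i,c_i$ ($0\le i\le D$) such that for any two vertices $x,y$ at distance $i$, exactly $c_i$ neighbours of $y$ are at distance $i-1$ from $x$ and exactly $b_i$ neighbours of $y$ are at distance $i+1$ from $x$. Then $\Gamma$ is regular of valency $k=b_0$, and $a_i:=k-b_i-c_i$. The eigenvalues of $\Gamma$ are those of its adjacency matrix. For an eigenvalue $\theta$, the standard sequence $u_i=u_i(\theta)$ ($0\le i\le D$) is defined by $u_0=1$, $u_1=\theta/k$, and $c_iu_{i-1}+a_iu_i+b_iu_{i+1}=\theta u_i$ for $1\le i\le D-1$ (and these recurrences, with $b_D=0$, also hold for $i=D$ when $\theta$ is an eigenvalue). *)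

theory Defs
  imports Complex_Main
begin

definition simple_graph :: "'a set \<Rightarrow> ('a \<Rightarrow> 'a \<Rightarrow> bool) \<Rightarrow> bool" where
  "simple_graph V E \<longleftrightarrow> finite V \<and> V \<noteq> {} \<and>
     (\<forall>x y. E x y \<longrightarrow> x \<in> V \<and> y \<in> V) \<and>
     (\<forall>x y. E x y \<longrightarrow> E y x) \<and> (\<forall>x. \<not> E x x)"

fun reach :: "('a \<Rightarrow> 'a \<Rightarrow> bool) \<Rightarrow> nat \<Rightarrow> 'a \<Rightarrow> 'a \<Rightarrow> bool" where
  "reach E 0 x y = (x = y)"
| "reach E (Suc n) x y = (reach E n x y \<or> (\<exists>z. reach E n x z \<and> E z y))"

definition connected_graph :: "'a set \<Rightarrow> ('a \<Rightarrow> 'a \<Rightarrow> bool) \<Rightarrow> bool" where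
  "connected_graph V E \<longleftrightarrow> (\<forall>x\<in>V. \<forall>y\<in>V. \<exists>n. reach E n x y)"

text \<open>Path-length distance (meaningful in a connected graph).\<close>
definition gdist :: "('a \<Rightarrow> 'a \<Rightarrow> bool) \<Rightarrow> 'a \<Rightarrow> 'a \<Rightarrow> nat" where
  "gdist E x y = (LEAST n. reach E n x y)"

definition diameter :: "'a set \<Rightarrow> ('a \<Rightarrow> 'a \<Rightarrow> bool) \<Rightarrow> nat" where
  "diameter V E = Max {gdist E x y | x y. x \<in> V \<and> y \<in> V}"

text \<open>Distance-regular graph of diameter D with intersection numbers b i, c i (0 \<le> i \<le> D).
  For i = 0 the condition on c reads c 0 = 0 (x has no neighbour at distance 0 from x).\<close>
definition distance_regular ::
  "'a set \<Rightarrow> ('a \<Rightarrow> 'a \<Rightarrow> bool) \<Rightarrow> nat \<Rightarrow> (nat \<Rightarrow> nat) \<Rightarrow> (nat \<Rightarrow> nat) \<Rightarrow> bool" where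
  "distance_regular V E D b c \<longleftrightarrow> simple_graph V E \<and> connected_graph V E \<and> diameter V E = D \<and>
     (\<forall>i\<le>D. \<forall>x\<in>V. \<forall>y\<in>V. gdist E x y = i \<longrightarrow>
        card {z\<in>V. E y z \<and> i \<ge> 1 \<and> gdist E x z = i - 1} = c i \<and>
        card {z\<in>V. E y z \<and> gdist E x z = i + 1} = b i)"

definition drg_k :: "(nat \<Rightarrow> nat) \<Rightarrow> real" where
  "drg_k b = real (b 0)"

definition drg_a :: "(nat \<Rightarrow> nat) \<Rightarrow> (nat \<Rightarrow> nat) \<Rightarrow> nat \<Rightarrow> real" where
  "drg_a b c i = real (b 0) - real (b i) - real (c i)"

definition adj_eigenvalue :: "'a set \<Rightarrow> ('a \<Rightarrow> 'a \<Rightarrow> bool) \<Rightarrow> real \<Rightarrow> bool" where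
  "adj_eigenvalue V E \<theta> \<longleftrightarrow> (\<exists>f :: 'a \<Rightarrow> real. (\<exists>x\<in>V. f x \<noteq> 0) \<and>
      (\<forall>x\<in>V. (\<Sum>y\<in>{y\<in>V. E x y}. f y) = \<theta> * f x))"

text \<open>Second largest among the distinct eigenvalues.\<close>
definition second_largest_eigenvalue :: "'a set \<Rightarrow> ('a \<Rightarrow> 'a \<Rightarrow> bool) \<Rightarrow> real \<Rightarrow> bool" where
  "second_largest_eigenvalue V E \<theta> \<longleftrightarrow> adj_eigenvalue V E \<theta> \<and>
     (\<exists>\<mu>. adj_eigenvalue V E \<mu> \<and> \<theta> < \<mu>) \<and>
     (\<forall>\<mu> \<nu>. adj_eigenvalue V E \<mu> \<and> adj_eigenvalue V E \<nu> \<and> \<theta> < \<mu> \<and> \<theta> < \<nu> \<longrightarrow> \<mu> = \<nu>)"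

fun std_seq :: "(nat \<Rightarrow> nat) \<Rightarrow> (nat \<Rightarrow> nat) \<Rightarrow> real \<Rightarrow> nat \<Rightarrow> real" where
  "std_seq b c \<theta> 0 = 1"
| "std_seq b c \<theta> (Suc 0) = \<theta> / drg_k b"
| "std_seq b c \<theta> (Suc (Suc i)) =
     (\<theta> * std_seq b c \<theta> (Suc i) - real (c (Suc i)) * std_seq b c \<theta> i
        - drg_a b c (Suc i) * std_seq b c \<theta> (Suc i)) / real (b (Suc i))"

end

theory Submission
  imports Defs
begin

lemma reach_mono: "reach E n x y \<Longrightarrow> n \<le> m \<Longrightarrow> reach E m x y"
proof (induction m)
  case 0 then show ?case by simp
next
  case (Suc m) then show ?case by (cases "n = Suc m") auto
qed

lemma alg:
  fixes m A2 A3 B1 B2 C2 C3 G0 G2 G3 Q :: real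
  assumes h1: "C2*G2 = Q*G0" and h2: "C3*G3 = (m - A2)*G2 - B1*m*G0" and h3: "(m - A3)*G3 = B2*G2"
  shows "((m - A3)*((m - A2)*Q - B1*C2*m) - B2*C3*Q) * G0 = 0"
proof -
  have "((m - A3)*((m - A2)*Q - B1*C2*m) - B2*C3*Q) * G0
      = (m-A3)*((m-A2)*(Q*G0) - B1*C2*m*G0) - B2*C3*(Q*G0)" by (simp add: algebra_simps)
  also have "\<dots> = (m-A3)*((m-A2)*(C2*G2) - B1*C2*m*G0) - B2*C3*(C2*G2)" using h1 by simp
  also have "\<dots> = C2*((m-A3)*((m-A2)*G2 - B1*m*G0)) - C2*C3*(B2*G2)" by (simp add: algebra_simps)
  also have "\<dots> = C2*((m-A3)*(C3*G3)) - C2*C3*(B2*G2)" using h2 by simp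
  also have "\<dots> = C2*C3*((m-A3)*G3) - C2*C3*(B2*G2)" by (simp add: algebra_simps)
  also have "\<dots> = 0" using h3 by simp
  finally show ?thesis .
qed

locale drg3 =
  fixes V :: "'a set" and E :: "'a \<Rightarrow> 'a \<Rightarrow> bool" and b c :: "nat \<Rightarrow> nat"
  assumes dr: "distance_regular V E 3 b c"
begin

lemma sg: "simple_graph V E" using dr by (simp add: distance_regular_def)
lemma finV: "finite V" using sg by (simp add: simple_graph_def)
lemma neV: "V \<noteq> {}" using sg by (simp add: simple_graph_def)
lemma edge: "E x y \<Longrightarrow> x \<in> V \<and> y \<in> V" using sg by (simp add: simple_graph_def)
lemma sym: "E x y \<Longrightarrow> E y x" using sg by (simp add: simple_graph_def)
lemma irr: "\<not> E x x" using sg by (simp add: simple_graph_def)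
lemma conn: "x \<in> V \<Longrightarrow> y \<in> V \<Longrightarrow> \<exists>n. reach E n x y"
  using dr by (simp add: distance_regular_def connected_graph_def)
lemma diam: "diameter V E = 3" using dr by (simp add: distance_regular_def)
lemma reg: "i \<le> 3 \<Longrightarrow> x \<in> V \<Longrightarrow> y \<in> V \<Longrightarrow> gdist E x y = i \<Longrightarrow>
        card {z\<in>V. E y z \<and> i \<ge> 1 \<and> gdist E x z = i - 1} = c i \<and>
        card {z\<in>V. E y z \<and> gdist E x z = i + 1} = b i"
  using dr unfolding distance_regular_def by blast

lemma reach_gdist: "x \<in> V \<Longrightarrow> y \<in> V \<Longrightarrow> reach E (gdist E x y) x y"
  unfolding gdist_def using conn by (metis LeastI_ex)

lemma gdist_le: "reach E n x y \<Longrightarrow> gdist E x y \<le> n"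
  unfolding gdist_def by (rule Least_le)

lemma gdist_edge: "x \<in> V \<Longrightarrow> E y z \<Longrightarrow> gdist E x z \<le> Suc (gdist E x y)"
proof -
  assume x: "x \<in> V" and e: "E y z"
  have "reach E (gdist E x y) x y" using reach_gdist x edge[OF e] by blast
  then have "reach E (Suc (gdist E x y)) x z" using e by auto
  then show ?thesis by (rule gdist_le)
qed

lemma gdist_0: "x \<in> V \<Longrightarrow> y \<in> V \<Longrightarrow> gdist E x y = 0 \<longleftrightarrow> x = y"
  using reach_gdist[of x y] gdist_le[of 0 x y] by auto

lemma gdist_1: "E x y \<Longrightarrow> gdist E x y = 1"
proof -
  assume e: "E x y"
  have "reach E (Suc 0) x y" using e by auto
  then have "gdist E x y \<le> 1" using gdist_le by fastforce
  moreover have "gdist E x y \<noteq> 0" using gdist_0 edge[OF e] irr e by auto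
  ultimately show ?thesis by simp
qed

lemma gdist_pred: "x \<in> V \<Longrightarrow> y \<in> V \<Longrightarrow> gdist E x y = Suc m \<Longrightarrow> \<exists>z. E z y \<and> gdist E x z = m"
proof -
  assume x: "x \<in> V" and y: "y \<in> V" and d: "gdist E x y = Suc m"
  have "reach E (Suc m) x y" using reach_gdist[OF x y] d by simp
  moreover have "\<not> reach E m x y" using gdist_le[of m x y] d by auto
  ultimately obtain z where z: "reach E m x z" "E z y" by auto
  have "gdist E x z \<le> m" using gdist_le[OF z(1)] .
  moreover have "Suc m \<le> Suc (gdist E x z)" using gdist_edge[OF x z(2)] d by simp
  ultimately show ?thesis using z by auto
qed

lemma gdist_le3: "x \<in> V \<Longrightarrow> y \<in> V \<Longrightarrow> gdist E x y \<le> 3"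
proof -
  assume "x \<in> V" "y \<in> V"
  have fin: "finite {gdist E x y | x y. x \<in> V \<and> y \<in> V}"
  proof -
    have "{gdist E x y | x y. x \<in> V \<and> y \<in> V} = (\<lambda>(x,y). gdist E x y) ` (V \<times> V)" by auto
    then show ?thesis using finV by simp
  qed
  then show ?thesis using diam \<open>x \<in> V\<close> \<open>y \<in> V\<close> unfolding diameter_def
    by (metis (mono_tags, lifting) Max_ge mem_Collect_eq)
qed

lemma ex3: "\<exists>x\<in>V. \<exists>y\<in>V. gdist E x y = 3"
proof -
  have "{gdist E x y | x y. x \<in> V \<and> y \<in> V} = (\<lambda>(x,y). gdist E x y) ` (V \<times> V)" by auto
  then have fin: "finite {gdist E x y | x y. x \<in> V \<and> y \<in> V}" using finV by simp
  have ne: "{gdist E x y | x y. x \<in> V \<and> y \<in> V} \<noteq> {}" using neV by auto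
  have "3 \<in> {gdist E x y | x y. x \<in> V \<and> y \<in> V}"
    using Max_in[OF fin ne] diam unfolding diameter_def by simp
  then show ?thesis by auto
qed

lemma card_ge1: assumes "finite A" "a \<in> A" shows "1 \<le> card A"
proof -
  have "A \<noteq> {}" using assms(2) by auto
  then have "0 < card A" using assms(1) by (simp add: card_gt_0_iff)
  then show ?thesis by simp
qed

lemma gdist_refl: "z \<in> V \<Longrightarrow> gdist E z z = 0"
  using gdist_le[of 0 z z] by simp

lemma degree: "z \<in> V \<Longrightarrow> card {w\<in>V. E z w} = b 0"
proof -
  assume z: "z \<in> V"
  have "card {w\<in>V. E z w \<and> gdist E z w = 0 + 1} = b 0"
    using conjunct2[OF reg[OF _ z z gdist_refl[OF z]]] by simp
  moreover have "{w\<in>V. E z w \<and> gdist E z w = 0 + 1} = {w\<in>V. E z w}" using gdist_1 by auto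
  ultimately show ?thesis by simp
qed

lemma c0: "c 0 = 0"
proof -
  obtain x where x: "x \<in> V" using neV by auto
  have "card {w\<in>V. E x w \<and> 0 \<ge> (1::nat) \<and> gdist E x w = 0 - 1} = c 0"
    using conjunct1[OF reg[OF _ x x gdist_refl[OF x]]] by simp
  then show ?thesis by simp
qed

lemma facts: "c 1 = 1 \<and> b 3 = 0 \<and> b 0 \<ge> 1 \<and> b 1 \<ge> 1 \<and> b 2 \<ge> 1 \<and> c 2 \<ge> 1 \<and> c 3 \<ge> 1 \<and> c 3 \<le> b 0"
proof -
  obtain x y where x: "x \<in> V" and y: "y \<in> V" and d3: "gdist E x y = 3" using ex3 by auto
  obtain z2 where z2: "E z2 y" "gdist E x z2 = 2" using gdist_pred[OF x y, of 2] d3 by auto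
  have z2V: "z2 \<in> V" using edge z2 by auto
  obtain z1 where z1: "E z1 z2" "gdist E x z1 = 1" using gdist_pred[OF x z2V, of 1] z2 by auto
  have z1V: "z1 \<in> V" using edge z1 by auto
  obtain z0 where z0: "E z0 z1" "gdist E x z0 = 0" using gdist_pred[OF x z1V, of 0] z1 by auto
  have "z0 = x" using z0 gdist_0 edge x by blast
  then have ex1: "E x z1" using z0 by simp
  have fs: "\<And>P. finite {w\<in>V. P w}" using finV by simp
  have C1: "card {w\<in>V. E z1 w \<and> 1 \<ge> (1::nat) \<and> gdist E x w = 1 - 1} = c 1" using reg[of 1 x z1] x z1V z1 by auto
  have "{w\<in>V. E z1 w \<and> 1 \<ge> (1::nat) \<and> gdist E x w = 1 - 1} = {x}"
    using gdist_0 x ex1 sym[OF ex1] by auto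
  then have c1: "c 1 = 1" using C1 by simp
  have "b 3 = card {w\<in>V. E y w \<and> gdist E x w = 3 + 1}" using reg[of 3 x y] x y d3 by auto
  also have "{w\<in>V. E y w \<and> gdist E x w = 3 + 1} = {}" using gdist_le3[OF x] by fastforce
  finally have b3: "b 3 = 0" by simp
  have "b 0 = card {w\<in>V. E x w \<and> gdist E x w = 0 + 1}" using reg[of 0 x x] x gdist_refl[OF x] by auto
  also have "1 \<le> \<dots>" by (rule card_ge1[OF fs]) (use ex1 z1V z1 in auto)
  finally have b0: "b 0 \<ge> 1" .
  have "b 1 = card {w\<in>V. E z1 w \<and> gdist E x w = 1 + 1}" using reg[of 1 x z1] x z1V z1 by auto
  also have "1 \<le> \<dots>" by (rule card_ge1[OF fs]) (use z1 z2 z2V in auto)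
  finally have b1: "b 1 \<ge> 1" .
  have "b 2 = card {w\<in>V. E z2 w \<and> gdist E x w = 2 + 1}" using reg[of 2 x z2] x z2V z2 by auto
  also have "1 \<le> \<dots>" by (rule card_ge1[OF fs]) (use z2 y d3 in auto)
  finally have b2: "b 2 \<ge> 1" .
  have "c 2 = card {w\<in>V. E z2 w \<and> 2 \<ge> (1::nat) \<and> gdist E x w = 2 - 1}" using reg[of 2 x z2] x z2V z2 by auto
  also have "1 \<le> \<dots>" by (rule card_ge1[OF fs]) (use z1 z1V sym[OF z1(1)] in auto)
  finally have c2: "c 2 \<ge> 1" .
  have "c 3 = card {w\<in>V. E y w \<and> 3 \<ge> (1::nat) \<and> gdist E x w = 3 - 1}" using reg[of 3 x y] x y d3 by auto
  also have "1 \<le> \<dots>" by (rule card_ge1[OF fs]) (use z2 z2V sym[OF z2(1)] in auto)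
  finally have c3: "c 3 \<ge> 1" .
  have "c 3 = card {w\<in>V. E y w \<and> 3 \<ge> (1::nat) \<and> gdist E x w = 3 - 1}" using reg[of 3 x y] x y d3 by auto
  also have "\<dots> \<le> card {w\<in>V. E y w}" by (rule card_mono) (use finV in auto)
  also have "\<dots> = b 0" using degree y by simp
  finally have c3k: "c 3 \<le> b 0" .
  show ?thesis using c1 b3 b0 b1 b2 c2 c3 c3k by simp
qed


definition Nf :: "nat \<Rightarrow> nat \<Rightarrow> real" where
  "Nf i j = (if i = Suc j then real (b j) else if Suc i = j then real (c j)
     else if i = j then real (b 0) - real (b j) - real (c j) else 0)"

lemma count:
  assumes x: "x \<in> V" and z: "z \<in> V" and d: "gdist E x z = j"
  shows "real (card {y\<in>V. E z y \<and> gdist E x y = i}) = Nf i j"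
proof -
  have j3: "j \<le> 3" using gdist_le3[OF x z] d by simp
  have R: "card {w\<in>V. E z w \<and> j \<ge> 1 \<and> gdist E x w = j - 1} = c j"
     "card {w\<in>V. E z w \<and> gdist E x w = j + 1} = b j" using reg[OF j3 x z d] by auto
  have nb: "\<And>w. E z w \<Longrightarrow> gdist E x w \<le> Suc j \<and> j \<le> Suc (gdist E x w)"
  proof -
    fix w assume e: "E z w"
    show "gdist E x w \<le> Suc j \<and> j \<le> Suc (gdist E x w)"
      using gdist_edge[OF x e] gdist_edge[OF x sym[OF e]] d by auto
  qed
  have fs: "\<And>P. finite {w\<in>V. P w}" using finV by simp
  show ?thesis
  proof (cases "i = Suc j")
    case True
    then show ?thesis using R(2) by (simp add: Nf_def)
  next
    case ni: False
    show ?thesis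
    proof (cases "Suc i = j")
      case True
      then have "{y\<in>V. E z y \<and> gdist E x y = i} = {w\<in>V. E z w \<and> j \<ge> 1 \<and> gdist E x w = j - 1}" by auto
      then show ?thesis using R(1) True ni by (simp add: Nf_def)
    next
      case ni2: False
      show ?thesis
      proof (cases "i = j")
        case True
        let ?A0 = "{w\<in>V. E z w \<and> gdist E x w = j}"
        let ?Am = "{w\<in>V. E z w \<and> j \<ge> 1 \<and> gdist E x w = j - 1}"
        let ?Ap = "{w\<in>V. E z w \<and> gdist E x w = j + 1}"
        have un: "{w\<in>V. E z w} = ?A0 \<union> (?Am \<union> ?Ap)"
        proof (rule set_eqI, rule iffI)
          fix w assume "w \<in> {w\<in>V. E z w}"
          then show "w \<in> ?A0 \<union> (?Am \<union> ?Ap)" using nb[of w] by auto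
        qed auto
        have "card {w\<in>V. E z w} = card ?A0 + (card ?Am + card ?Ap)"
          unfolding un by (subst card_Un_disjoint, (use fs in auto)[3])+ (use fs in auto)
        then have "card ?A0 + (c j + b j) = b 0" using degree[OF z] R by simp
        then have "real (card ?A0) = real (b 0) - real (b j) - real (c j)" by linarith
        then show ?thesis using True by (simp add: Nf_def)
      next
        case nj: False
        have e: "{y\<in>V. E z y \<and> gdist E x y = i} = {}" using nb ni ni2 nj by fastforce
        have "Nf i j = 0" unfolding Nf_def by (simp only: ni ni2 nj if_False)
        then show ?thesis unfolding e by simp
      qed
    qed
  qed
qed


lemma eig_rec:
  assumes x: "x \<in> V" and ev: "\<forall>y\<in>V. (\<Sum>z\<in>{z\<in>V. E y z}. f z) = \<mu> * f y"
  shows "\<mu> * (\<Sum>z\<in>{z\<in>V. gdist E x z = i}. f z) = (\<Sum>j\<le>3. Nf i j * (\<Sum>z\<in>{z\<in>V. gdist E x z = j}. f z))"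
proof -
  let ?S = "{y\<in>V. gdist E x y = i}"
  have "\<mu> * (\<Sum>z\<in>?S. f z) = (\<Sum>y\<in>?S. \<mu> * f y)" by (simp add: sum_distrib_left)
  also have "\<dots> = (\<Sum>y\<in>?S. \<Sum>z\<in>V. if E y z then f z else 0)"
  proof (rule sum.cong[OF refl])
    fix y assume "y \<in> ?S"
    then have "\<mu> * f y = (\<Sum>z\<in>{z\<in>V. E y z}. f z)" using ev by auto
    also have "\<dots> = (\<Sum>z\<in>V. if E y z then f z else 0)" by (rule sum.inter_filter[OF finV])
    finally show "\<mu> * f y = (\<Sum>z\<in>V. if E y z then f z else 0)" .
  qed
  also have "\<dots> = (\<Sum>z\<in>V. \<Sum>y\<in>?S. if E y z then f z else 0)" by (rule sum.swap)
  also have "\<dots> = (\<Sum>z\<in>V. f z * Nf i (gdist E x z))"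
  proof (rule sum.cong[OF refl])
    fix z assume z: "z \<in> V"
    have "(\<Sum>y\<in>?S. if E y z then f z else 0) = (\<Sum>y\<in>{y\<in>?S. E y z}. f z)"
      by (rule sum.inter_filter[symmetric]) (use finV in auto)
    also have "\<dots> = real (card {y\<in>?S. E y z}) * f z" by simp
    also have "{y\<in>?S. E y z} = {y\<in>V. E z y \<and> gdist E x y = i}" using sym by blast
    also have "real (card {y\<in>V. E z y \<and> gdist E x y = i}) = Nf i (gdist E x z)"
      by (rule count[OF x z refl])
    finally show "(\<Sum>y\<in>?S. if E y z then f z else 0) = f z * Nf i (gdist E x z)" by simp
  qed
  also have "\<dots> = (\<Sum>z\<in>V. \<Sum>j\<le>3. if gdist E x z = j then f z * Nf i j else 0)"
  proof (rule sum.cong[OF refl])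
    fix z assume z: "z \<in> V"
    have "gdist E x z \<in> {..3}" using gdist_le3[OF x z] by simp
    then show "f z * Nf i (gdist E x z) = (\<Sum>j\<le>3. if gdist E x z = j then f z * Nf i j else 0)"
      by (simp add: sum.delta sum.delta')
  qed
  also have "\<dots> = (\<Sum>j\<le>3. \<Sum>z\<in>V. if gdist E x z = j then f z * Nf i j else 0)" by (rule sum.swap)
  also have "\<dots> = (\<Sum>j\<le>3. Nf i j * (\<Sum>z\<in>{z\<in>V. gdist E x z = j}. f z))"
  proof (rule sum.cong[OF refl])
    fix j
    have "(\<Sum>z\<in>V. if gdist E x z = j then f z * Nf i j else 0) = (\<Sum>z\<in>{z\<in>V. gdist E x z = j}. f z * Nf i j)"
      by (rule sum.inter_filter[OF finV, symmetric])
    also have "\<dots> = Nf i j * (\<Sum>z\<in>{z\<in>V. gdist E x z = j}. f z)" by (simp add: sum_distrib_left mult.commute)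
    finally show "(\<Sum>z\<in>V. if gdist E x z = j then f z * Nf i j else 0) = Nf i j * (\<Sum>z\<in>{z\<in>V. gdist E x z = j}. f z)" .
  qed
  finally show ?thesis .
qed

lemma sum4: "(\<Sum>j\<le>(3::nat). h j) = h 0 + h 1 + h 2 + (h 3 :: real)"
  by (simp add: numeral_3_eq_3 numeral_2_eq_2)

definition qq :: "real \<Rightarrow> real" where
  "qq \<mu> = \<mu>^2 - drg_a b c 1 * \<mu> - real (b 0)"

definition PP :: "real \<Rightarrow> real" where
  "PP \<mu> = (\<mu> - drg_a b c 3) * ((\<mu> - drg_a b c 2) * qq \<mu> - real (b 1) * real (c 2) * \<mu>)
      - real (b 2) * real (c 3) * qq \<mu>"

lemma eig_poly:
  assumes "adj_eigenvalue V E \<mu>"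
  shows "PP \<mu> = 0"
proof -
  obtain f x where x: "x \<in> V" and fx: "f x \<noteq> 0"
    and ev: "\<forall>y\<in>V. (\<Sum>z\<in>{z\<in>V. E y z}. f z) = \<mu> * f y"
    using assms unfolding adj_eigenvalue_def by blast
  define g where "g j = (\<Sum>z\<in>{z\<in>V. gdist E x z = j}. f z)" for j
  have R: "\<And>i. \<mu> * g i = Nf i 0 * g 0 + Nf i 1 * g 1 + Nf i 2 * g 2 + Nf i 3 * g 3"
    using eig_rec[OF x ev] sum4 unfolding g_def by simp
  have "{z\<in>V. gdist E x z = 0} = {x}" using gdist_0 x by auto
  then have g0: "g 0 = f x" unfolding g_def by simp
  have F: "c 1 = 1" "b 3 = 0" using facts by auto
  have E0: "\<mu> * g 0 = g 1" using R[of 0] c0 F by (simp add: Nf_def)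
  have E1: "\<mu> * g 1 = real (b 0) * g 0 + drg_a b c 1 * g 1 + real (c 2) * g 2"
    using R[of 1] by (simp add: Nf_def drg_a_def)
  have E2: "\<mu> * g 2 = real (b 1) * g 1 + drg_a b c 2 * g 2 + real (c 3) * g 3"
    using R[of 2] by (simp add: Nf_def drg_a_def)
  have E3: "\<mu> * g 3 = real (b 2) * g 2 + drg_a b c 3 * g 3"
    using R[of 3] by (simp add: Nf_def drg_a_def)
  have H2: "real (c 2) * g 2 = qq \<mu> * g 0"
    using E0 E1 unfolding qq_def by (simp add: power2_eq_square algebra_simps)
  have H3: "real (c 3) * g 3 = (\<mu> - drg_a b c 2) * g 2 - real (b 1) * \<mu> * g 0"
    using E0 E2 by (simp add: algebra_simps)
  have E3': "(\<mu> - drg_a b c 3) * g 3 = real (b 2) * g 2" using E3 by (simp add: algebra_simps)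
  have "PP \<mu> * g 0 = 0" unfolding PP_def by (rule alg[OF H2 H3 E3'])
  then show ?thesis using fx g0 by simp
qed

lemma k_eig: "adj_eigenvalue V E (real (b 0))"
proof -
  obtain x where "x \<in> V" using neV by auto
  moreover have "\<forall>y\<in>V. (\<Sum>z\<in>{z\<in>V. E y z}. (1::real)) = real (b 0) * 1" using degree by simp
  ultimately show ?thesis unfolding adj_eigenvalue_def by (intro exI[of _ "\<lambda>_. 1"]) auto
qed

end

lemma cubic_root:
  fixes R :: "real \<Rightarrow> real" and p q r t t' k \<mu> :: real
  assumes R: "\<And>x. R x = x^3 + p*x^2 + q*x + r"
    and h1: "R t' > 0" and h2: "R t < 0" and h3: "t' < t" and h4: "t < k" and h5: "t < \<mu>"
    and h6: "R k = 0" and h7: "R \<mu> = 0"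
  shows "\<mu> = k"
proof (rule ccontr)
  assume ne: "\<mu> \<noteq> k"
  define w where "w = -p - k - \<mu>"
  have "(k-\<mu>)*(k^2+k*\<mu>+\<mu>^2+p*(k+\<mu>)+q) = (k^3+p*k^2+q*k+r) - (\<mu>^3+p*\<mu>^2+q*\<mu>+r)"
    by (simp add: algebra_simps power2_eq_square power3_eq_cube)
  also have "\<dots> = 0" using h6 h7 R by simp
  finally have S: "k^2+k*\<mu>+\<mu>^2+p*(k+\<mu>)+q = 0" using ne by simp
  have i1: "k*\<mu> + k*w + \<mu>*w = -(k^2+k*\<mu>+\<mu>^2+p*(k+\<mu>))"
    by (simp add: w_def algebra_simps power2_eq_square)
  have qv: "q = k*\<mu> + k*w + \<mu>*w" using i1 S by linarith
  have i2: "-k*\<mu>*w - (-(k^3+p*k^2+q*k)) = k*(k^2+k*\<mu>+\<mu>^2+p*(k+\<mu>)+q)"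
    by (simp add: w_def algebra_simps power2_eq_square power3_eq_cube)
  have rv: "r = -k*\<mu>*w" using i2 S h6 R[of k] by simp
  have F: "\<And>x. R x = (x-k)*(x-\<mu>)*(x-w)"
    unfolding R qv rv by (simp add: w_def algebra_simps power2_eq_square power3_eq_cube)
  have pt: "(t-k)*(t-\<mu>) > 0" using h4 h5 by (simp add: mult_neg_neg)
  have pt': "(t'-k)*(t'-\<mu>) > 0" using h3 h4 h5 by (simp add: mult_neg_neg)
  have "t - w < 0"
  proof (rule ccontr)
    assume "\<not> t - w < 0"
    then have "(t-k)*(t-\<mu>)*(t-w) \<ge> 0" using pt by simp
    then show False using h2 F[of t] by simp
  qed
  moreover have "t' - w > 0"
  proof (rule ccontr)
    assume "\<not> t' - w > 0"
    then have "(t'-k)*(t'-\<mu>)*(t'-w) \<le> 0" using pt' by (intro mult_nonneg_nonpos) auto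
    then show False using h1 F[of t'] by simp
  qed
  ultimately show False using h3 by simp
qed

theorem theorem7:
  fixes V :: "'a set" and E :: "'a \<Rightarrow> 'a \<Rightarrow> bool" and b c :: "nat \<Rightarrow> nat" and \<theta> :: real
  assumes "distance_regular V E 3 b c"
    and "adj_eigenvalue V E \<theta>"
  shows "(std_seq b c \<theta> 2 = 0 \<longleftrightarrow> \<theta> = drg_a b c 3)
    \<and> (\<theta> = drg_a b c 3 \<longleftrightarrow> \<theta> = (drg_a b c 1 + sqrt ((drg_a b c 1)\<^sup>2 + 4 * drg_k b)) / 2)
    \<and> (std_seq b c \<theta> 2 = 0 \<longrightarrow> second_largest_eigenvalue V E \<theta>)"
proof -
  interpret drg3 V E b c by unfold_locales (rule assms(1))
  have F: "c 1 = 1" "b 3 = 0" "b 0 \<ge> 1" "b 1 \<ge> 1" "b 2 \<ge> 1" "c 2 \<ge> 1" "c 3 \<ge> 1" "c 3 \<le> b 0"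
    using facts by auto
  define k where "k = real (b 0)"
  define a1 where "a1 = drg_a b c 1"
  define a2 where "a2 = drg_a b c 2"
  define a3 where "a3 = drg_a b c 3"
  define B1 where "B1 = real (b 1)"
  define B2 where "B2 = real (b 2)"
  define C2 where "C2 = real (c 2)"
  define C3 where "C3 = real (c 3)"
  have kpos: "k > 0" using F unfolding k_def by simp
  have B1p: "B1 > 0" and B2p: "B2 > 0" and C2p: "C2 > 0" and C3p: "C3 > 0"
    using F unfolding B1_def B2_def C2_def C3_def by auto
  have a3v: "a3 = k - C3" unfolding a3_def k_def C3_def drg_a_def using F by simp
  have a3nn: "a3 \<ge> 0" using a3v F unfolding k_def C3_def by simp
  have a3k: "a3 < k" using a3v C3p by simp
  have qqv: "\<And>x. qq x = x^2 - a1*x - k" unfolding qq_def a1_def k_def by simp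
  have PPv: "\<And>x. PP x = (x - a3) * ((x - a2) * qq x - B1 * C2 * x) - B2 * C3 * qq x"
    unfolding PP_def a2_def a3_def B1_def B2_def C2_def C3_def by simp
  have Pt: "PP \<theta> = 0" by (rule eig_poly[OF assms(2)])
  have u2: "std_seq b c \<theta> 2 = (\<theta> * (\<theta> / k) - 1 - a1 * (\<theta> / k)) / B1"
  proof -
    have c1: "c (Suc 0) = 1" using F(1) by simp
    show ?thesis by (simp add: numeral_2_eq_2 drg_k_def k_def a1_def B1_def c1)
  qed
  have u2': "\<theta> * (\<theta> / k) - 1 - a1 * (\<theta> / k) = qq \<theta> / k"
    using kpos unfolding qqv by (simp add: field_simps power2_eq_square)
  have U: "std_seq b c \<theta> 2 = 0 \<longleftrightarrow> qq \<theta> = 0"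
    using u2 u2' B1p kpos by simp
  have A: "qq \<theta> = 0 \<longleftrightarrow> \<theta> = a3"
  proof
    assume q0: "qq \<theta> = 0"
    have "PP \<theta> = (\<theta> - a3) * (- (B1 * C2 * \<theta>))" unfolding PPv q0 by simp
    then have "(\<theta> - a3) * (B1 * C2 * \<theta>) = 0" using Pt by simp
    moreover have "\<theta> \<noteq> 0" using q0 kpos unfolding qqv by auto
    ultimately show "\<theta> = a3" using B1p C2p by simp
  next
    assume "\<theta> = a3"
    then have "PP \<theta> = - (B2 * C3 * qq \<theta>)" unfolding PPv by simp
    then show "qq \<theta> = 0" using Pt B2p C3p by simp
  qed
  define s where "s = sqrt (a1^2 + 4*k)"
  have nn: "0 \<le> a1^2 + 4*k"
  proof -
    have "0 \<le> a1^2" by simp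
    then show "0 \<le> a1^2 + 4*k" using kpos by linarith
  qed
  have s2: "s^2 = a1^2 + 4*k" unfolding s_def using nn by simp
  have s0: "s \<ge> 0" unfolding s_def using nn by simp
  have sgt: "s > \<bar>a1\<bar>"
  proof -
    have "\<bar>a1\<bar>^2 < s^2" using s2 kpos by simp
    then show ?thesis using s0 by (metis abs_ge_zero abs_of_nonneg power_less_imp_less_base)
  qed
  have Bq: "\<And>x. qq x = ((2*x - a1)^2 - s^2) / 4"
    unfolding qqv s2 by (simp add: power2_eq_square field_simps)
  have B: "\<theta> = a3 \<longleftrightarrow> \<theta> = (a1 + s) / 2"
  proof
    assume t: "\<theta> = a3"
    then have "qq \<theta> = 0" using A by simp
    then have "(2*\<theta> - a1)^2 = s^2" unfolding Bq by simp
    then have "2*\<theta> - a1 = s \<or> 2*\<theta> - a1 = -s" by (metis power2_eq_iff)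
    moreover have "2*\<theta> - a1 \<noteq> -s" using t a3nn sgt by linarith
    ultimately show "\<theta> = (a1 + s) / 2" by simp
  next
    assume "\<theta> = (a1 + s) / 2"
    then have "2*\<theta> - a1 = s" by simp
    then have "(2*\<theta> - a1)^2 = s^2" by simp
    then have "qq \<theta> = 0" unfolding Bq by simp
    then show "\<theta> = a3" using A by simp
  qed
  have C: "second_largest_eigenvalue V E \<theta>" if q0: "qq \<theta> = 0"
  proof -
    have ta: "\<theta> = a3" using A q0 by simp
    have tpos: "\<theta> > 0"
    proof -
      have "\<theta> \<noteq> 0" using q0 kpos unfolding qqv by auto
      then show ?thesis using ta a3nn by simp
    qed
    define t' where "t' = a1 - \<theta>"
    have "\<theta>*t' + k = -(\<theta>^2 - a1*\<theta> - k)" by (simp add: t'_def algebra_simps power2_eq_square)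
    then have tt': "\<theta>*t' = -k" using q0 unfolding qqv by simp
    have t'neg: "t' < 0"
    proof (rule ccontr)
      assume "\<not> t' < 0"
      then have "\<theta>*t' \<ge> 0" using tpos by simp
      then show False using tt' kpos by simp
    qed
    have qqf: "\<And>x. qq x = (x-\<theta>)*(x-t')"
    proof -
      fix x
      have "(x-\<theta>)*(x-t') = x^2 - a1*x + \<theta>*t'" by (simp add: t'_def algebra_simps power2_eq_square)
      then show "qq x = (x-\<theta>)*(x-t')" unfolding qqv tt' by simp
    qed
    define Rf where "Rf x = (x-\<theta>)*(x-a2)*(x-t') - B1*C2*x - B2*C3*(x-t')" for x
    have PR: "\<And>x. PP x = (x-\<theta>) * Rf x"
      unfolding PPv qqf Rf_def ta[symmetric] by (simp add: algebra_simps)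
    have Rc: "\<And>x. Rf x = x^3 + (-(\<theta>+a2+t'))*x^2 + (\<theta>*a2 + \<theta>*t' + a2*t' - B1*C2 - B2*C3)*x
        + (-\<theta>*a2*t' + B2*C3*t')"
      unfolding Rf_def by (simp add: algebra_simps power2_eq_square power3_eq_cube)
    have R1: "Rf t' > 0" unfolding Rf_def using B1p C2p t'neg by (simp add: mult_pos_neg)
    have R2: "Rf \<theta> < 0"
    proof -
      have "B1*C2*\<theta> > 0" using B1p C2p tpos by simp
      moreover have "B2*C3*(\<theta>-t') > 0" using B2p C3p tpos t'neg by simp
      ultimately show ?thesis unfolding Rf_def by simp
    qed
    have keig: "adj_eigenvalue V E k" unfolding k_def by (rule k_eig)
    have tk: "\<theta> < k" using ta a3k by simp
    have Rk: "Rf k = 0" using eig_poly[OF keig] PR[of k] tk by simp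
    have up: "\<mu> = k" if "adj_eigenvalue V E \<mu>" "\<theta> < \<mu>" for \<mu>
    proof -
      have "Rf \<mu> = 0" using eig_poly[OF that(1)] PR[of \<mu>] that(2) by simp
      moreover have "t' < \<theta>" using t'neg tpos by simp
      ultimately show ?thesis using cubic_root[OF Rc R1 R2 _ tk that(2) Rk] by blast
    qed
    show ?thesis unfolding second_largest_eigenvalue_def
      using assms(2) keig tk up by blast
  qed
  show ?thesis
    using U A B C unfolding a3_def[symmetric] a1_def[symmetric] s_def drg_k_def k_def[symmetric] by blast
qed

end
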